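(* For two nonempty convex sets $A\subseteq B\subseteq\mathbb{R}^d_{\geq 0}$ where $A$ is down-closed, $\operatorname{rdist}(A,B)=\operatorname{LPgapMax}(A,B)$.
   Context: A convex set $C\subseteq\mathbb{R}^d_{\geq0}$ is down-closed if $x\in C$, $y\in\mathbb{R}^d_{\geq0}$, $y\leq x$ imply $y\in C$. $\operatorname{LPgapMax}(A,B)=\inf\{\varepsilon\geq0: (1+\varepsilon)\sup_{a\in A}c^\intercal a\geq\sup_{b\in B}c^\intercal b\ \ \forall c\in\mathbb{R}^d_{\geq0}\}$. For nonempty convex $A\subseteq B\subseteq\mathbb{R}^d$, $\operatorname{rdist}(A,B)=\sup_{\pi}\frac{\sup_{b\in B}\inf_{a\in A}|\pi(b)-\pi(a)|}{\sup_{a,a'\in A}|\pi(a)-\pi(a')|}$ over all linear $\pi:\mathbb{R}^d\to\mathbb{R}$, with fractions having denominator $\infty$ and $0/0$ interpreted as $0$. *)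

theory Defs
  imports "HOL-Analysis.Analysis"
begin

text \<open>Vectors in R^d are modelled as real^'d for a finite index type 'd.
  Extended reals are used since suprema/infima may be infinite.\<close>

definition nonneg_vec :: "real^'d \<Rightarrow> bool" where
  "nonneg_vec x \<longleftrightarrow> (\<forall>i. 0 \<le> x $ i)"

definition down_closed :: "(real^'d) set \<Rightarrow> bool" where
  "down_closed C \<longleftrightarrow>
     (\<forall>x\<in>C. \<forall>y. nonneg_vec y \<and> (\<forall>i. y $ i \<le> x $ i) \<longrightarrow> y \<in> C)"

definition LPgapMax :: "(real^'d) set \<Rightarrow> (real^'d) set \<Rightarrow> ereal" where
  "LPgapMax A B = Inf {ereal eps | eps. eps \<ge> 0 \<and>
     (\<forall>c. nonneg_vec c \<longrightarrow>
        ereal (1 + eps) * (SUP a\<in>A. ereal (inner c a)) \<ge> (SUP b\<in>B. ereal (inner c b)))}"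

definition rfrac :: "ereal \<Rightarrow> ereal \<Rightarrow> ereal" where
  "rfrac n d = (if d = \<infinity> then 0 else if d = 0 then (if n = 0 then 0 else \<infinity>) else n / d)"

definition rdist :: "(real^'d) set \<Rightarrow> (real^'d) set \<Rightarrow> ereal" where
  "rdist A B = (SUP \<pi>\<in>{\<pi> :: real^'d \<Rightarrow> real. linear \<pi>}.
     rfrac (SUP b\<in>B. INF a\<in>A. ereal \<bar>\<pi> b - \<pi> a\<bar>)
           (SUP p\<in>A \<times> A. ereal \<bar>\<pi> (fst p) - \<pi> (snd p)\<bar>))"

end

theory Submission
  imports Defs
begin

lemma lin_rep:
  fixes \<pi> :: "real^'d \<Rightarrow> real"
  assumes "linear \<pi>" shows "\<pi> x = inner (\<chi> i. \<pi> (axis i 1)) x"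
proof -
  have "x = (\<Sum>i\<in>UNIV. x$i *\<^sub>R axis i 1)"
    by (metis basis_expansion scalar_mult_eq_scaleR)
  then have "\<pi> x = \<pi> (\<Sum>i\<in>UNIV. x$i *\<^sub>R axis i 1)" by simp
  also have "\<dots> = (\<Sum>i\<in>UNIV. x$i * \<pi> (axis i 1))"
    using assms by (simp add: linear_sum linear_cmul)
  also have "\<dots> = inner (\<chi> i. \<pi> (axis i 1)) x"
    by (simp add: inner_vec_def mult.commute)
  finally show ?thesis .
qed

lemma inner_nonneg_vec:
  fixes c x :: "real^'d"
  assumes "nonneg_vec c" "nonneg_vec x" shows "0 \<le> inner c x"
  using assms unfolding nonneg_vec_def inner_vec_def
  by (intro sum_nonneg) simp

lemma trunc_in:
  fixes A :: "(real^'d) set"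
  assumes "down_closed A" "a \<in> A" "nonneg_vec a"
  shows "(\<chi> i. if P i then a$i else 0) \<in> A"
  using assms unfolding down_closed_def nonneg_vec_def by auto

lemma interp:
  fixes \<pi> :: "real^'d \<Rightarrow> real"
  assumes "convex A" "x \<in> A" "y \<in> A" "linear \<pi>" "\<pi> y \<le> t" "t \<le> \<pi> x"
  shows "\<exists>z\<in>A. \<pi> z = t"
proof (cases "\<pi> x = \<pi> y")
  case True
  then show ?thesis using assms by (intro bexI[of _ x]) auto
next
  case False
  define l where "l = (\<pi> x - t) / (\<pi> x - \<pi> y)"
  have d: "\<pi> x - \<pi> y > 0" using assms False by auto
  have l0: "0 \<le> l" "l \<le> 1" using assms d unfolding l_def by (auto simp: field_simps)
  have "(1 - l) *\<^sub>R x + l *\<^sub>R y \<in> A"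
    using assms l0 by (intro convexD) auto
  have "\<pi> ((1 - l) *\<^sub>R x + l *\<^sub>R y) = \<pi> x - l * (\<pi> x - \<pi> y)"
    using assms by (simp add: linear_add linear_cmul del: scaleR_diff_left) (simp add: algebra_simps)
  moreover have "l * (\<pi> x - \<pi> y) = \<pi> x - t" using d unfolding l_def by simp
  ultimately have "\<pi> ((1 - l) *\<^sub>R x + l *\<^sub>R y) = t" by simp
  then show ?thesis using \<open>(1 - l) *\<^sub>R x + l *\<^sub>R y \<in> A\<close> by blast
qed

lemma part1:
  fixes A B :: "(real^'d) set" and c :: "real^'d"
  assumes ne: "A \<noteq> {}" and sub: "A \<subseteq> B" and nnB: "\<forall>x\<in>B. nonneg_vec x"
    and dc: "down_closed A" and nc: "nonneg_vec c" and r0: "0 \<le> r"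
    and le: "rfrac (SUP b\<in>B. INF a\<in>A. ereal \<bar>inner c b - inner c a\<bar>)
           (SUP p\<in>A \<times> A. ereal \<bar>inner c (fst p) - inner c (snd p)\<bar>) \<le> ereal r"
  shows "(SUP b\<in>B. ereal (inner c b)) \<le> ereal (1 + r) * (SUP a\<in>A. ereal (inner c a))"
proof -
  define SA where "SA = (SUP a\<in>A. ereal (inner c a))"
  define num where "num = (SUP b\<in>B. INF a\<in>A. ereal \<bar>inner c b - inner c a\<bar>)"
  define den where "den = (SUP p\<in>A \<times> A. ereal \<bar>inner c (fst p) - inner c (snd p)\<bar>)"
  have nnA: "\<forall>x\<in>A. nonneg_vec x" using sub nnB by auto
  have ipA: "0 \<le> inner c a" if "a \<in> A" for a using nnA that nc inner_nonneg_vec by blast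
  have ipB: "0 \<le> inner c b" if "b \<in> B" for b using nnB that nc inner_nonneg_vec by blast
  obtain a0 where a0: "a0 \<in> A" using ne by auto
  have zA: "(0::real^'d) \<in> A"
  proof -
    have "nonneg_vec a0" using nnA a0 by blast
    then have "nonneg_vec (0::real^'d) \<and> (\<forall>i. (0::real^'d) $ i \<le> a0 $ i)"
      unfolding nonneg_vec_def by simp
    then show ?thesis using dc a0 unfolding down_closed_def by blast
  qed
  have uA: "ereal (inner c a) \<le> SA" if "a \<in> A" for a
    unfolding SA_def using that by (rule SUP_upper)
  have "den = SA"
  proof (rule antisym)
    show "den \<le> SA" unfolding den_def
    proof (rule SUP_least, clarify)
      fix a a' assume "a \<in> A" "a' \<in> A"
      then have "\<bar>inner c a - inner c a'\<bar> \<le> max (inner c a) (inner c a')"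
        using ipA by (auto simp: abs_if max_def)
      moreover have "ereal (max (inner c a) (inner c a')) \<le> SA"
        using uA \<open>a \<in> A\<close> \<open>a' \<in> A\<close> by (simp add: max_def)
      ultimately show "ereal \<bar>inner c (fst (a, a')) - inner c (snd (a, a'))\<bar> \<le> SA"
        by (metis ereal_less_eq(3) fst_conv order_trans snd_conv)
    qed
    show "SA \<le> den" unfolding SA_def
    proof (rule SUP_least)
      fix a assume "a \<in> A"
      then have "(a, 0) \<in> A \<times> A" using zA by auto
      then show "ereal (inner c a) \<le> den" unfolding den_def
        by (rule SUP_upper2) (use ipA \<open>a \<in> A\<close> in simp)
    qed
  qed
  show ?thesis
  proof (cases "SA = \<infinity>")
    case True
    have "ereal (1 + r) * SA = \<infinity>" using True r0 by simp
    then show ?thesis unfolding SA_def[symmetric] by (metis ereal_less_eq(1))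
  next
    case False
    have "SA \<ge> 0" using uA[OF a0] ipA[OF a0] by (metis ereal_less_eq(5) order_trans)
    then obtain s where s: "SA = ereal s" "0 \<le> s" using False
      by (cases SA) auto
    have sA: "inner c a \<le> s" if "a \<in> A" for a using uA[OF that] s by simp
    have nb: "ereal (inner c b - s) \<le> num" if "b \<in> B" for b
    proof -
      have "ereal (inner c b - s) \<le> (INF a\<in>A. ereal \<bar>inner c b - inner c a\<bar>)"
      proof (rule INF_greatest)
        fix a assume "a \<in> A"
        then show "ereal (inner c b - s) \<le> ereal \<bar>inner c b - inner c a\<bar>"
          using sA[of a] by simp
      qed
      also have "\<dots> \<le> num" unfolding num_def using that by (rule SUP_upper)
      finally show ?thesis .
    qed
    have le2: "rfrac num (ereal s) \<le> ereal r" using le \<open>den = SA\<close> s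
      unfolding num_def den_def by simp
    have bb: "inner c b \<le> (1 + r) * s" if "b \<in> B" for b
    proof (cases "s = 0")
      case True
      then have "num = 0" using le2 unfolding rfrac_def by (auto split: if_splits)
      then show ?thesis using nb[OF that] True by simp
    next
      case False
      then have sp: "s > 0" using s by simp
      have "num \<noteq> \<infinity>" using le2 sp unfolding rfrac_def by auto
      moreover have "num \<noteq> -\<infinity>" using nb[OF that] by auto
      ultimately obtain n where n: "num = ereal n" by (cases num) auto
      have "n / s \<le> r" using le2 sp n unfolding rfrac_def by simp
      then have "n \<le> r * s" using sp by (simp add: field_simps)
      moreover have "inner c b - s \<le> n" using nb[OF that] n by simp
      ultimately show ?thesis by (simp add: algebra_simps)
    qed
    have "(SUP b\<in>B. ereal (inner c b)) \<le> ereal ((1 + r) * s)"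
      by (rule SUP_least) (use bb in simp)
    then show ?thesis using s unfolding SA_def by simp
  qed
qed

lemma part2:
  fixes A B :: "(real^'d) set" and \<pi> :: "real^'d \<Rightarrow> real"
  assumes ne: "A \<noteq> {}" and neB: "B \<noteq> {}" and cvx: "convex A"
    and sub: "A \<subseteq> B" and nnB: "\<forall>x\<in>B. nonneg_vec x"
    and dc: "down_closed A" and e0: "0 \<le> eps"
    and cond: "\<forall>c. nonneg_vec c \<longrightarrow>
        ereal (1 + eps) * (SUP a\<in>A. ereal (inner c a)) \<ge> (SUP b\<in>B. ereal (inner c b))"
    and lin: "linear \<pi>"
  shows "rfrac (SUP b\<in>B. INF a\<in>A. ereal \<bar>\<pi> b - \<pi> a\<bar>)
           (SUP p\<in>A \<times> A. ereal \<bar>\<pi> (fst p) - \<pi> (snd p)\<bar>) \<le> ereal eps"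
proof -
  define c where "c = (\<chi> i. \<pi> (axis i 1))"
  have pc: "\<pi> x = inner c x" for x unfolding c_def by (rule lin_rep[OF lin])
  define cp where "cp = (\<chi> i. max (c$i) 0)"
  define cm where "cm = (\<chi> i. max (- (c$i)) 0)"
  have ncp: "nonneg_vec cp" unfolding cp_def nonneg_vec_def by simp
  have ncm: "nonneg_vec cm" unfolding cm_def nonneg_vec_def by simp
  define num where "num = (SUP b\<in>B. INF a\<in>A. ereal \<bar>\<pi> b - \<pi> a\<bar>)"
  define den where "den = (SUP p\<in>A \<times> A. ereal \<bar>\<pi> (fst p) - \<pi> (snd p)\<bar>)"
  have nnA: "\<forall>x\<in>A. nonneg_vec x" using sub nnB by auto
  obtain a0 where a0: "a0 \<in> A" using ne by auto
  have zA: "(0::real^'d) \<in> A"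
  proof -
    have "nonneg_vec a0" using nnA a0 by blast
    then have "nonneg_vec (0::real^'d) \<and> (\<forall>i. (0::real^'d) $ i \<le> a0 $ i)"
      unfolding nonneg_vec_def by simp
    then show ?thesis using dc a0 unfolding down_closed_def by blast
  qed
  have den0: "0 \<le> den" unfolding den_def
    by (rule SUP_upper2[of "(a0, a0)"]) (use a0 in auto)
  have num0: "0 \<le> num"
  proof -
    obtain b0 where "b0 \<in> B" using neB by auto
    then show ?thesis unfolding num_def
      by (rule SUP_upper2) (rule INF_greatest, simp)
  qed
  show ?thesis
  proof (cases "den = \<infinity>")
    case True
    then show ?thesis unfolding num_def[symmetric] den_def[symmetric] rfrac_def using e0 by simp
  next
    case False
    then obtain w where w: "den = ereal w" "0 \<le> w" using den0 by (cases den) auto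
    have wb: "\<bar>\<pi> a - \<pi> a'\<bar> \<le> w" if "a \<in> A" "a' \<in> A" for a a'
    proof -
      have "ereal \<bar>\<pi> (fst (a, a')) - \<pi> (snd (a, a'))\<bar> \<le> den"
        unfolding den_def by (rule SUP_upper) (use that in auto)
      then show ?thesis using w by simp
    qed
    define pos where "pos a = (\<chi> i. if 0 \<le> c$i then a$i else 0)" for a :: "real^'d"
    define neg where "neg a = (\<chi> i. if \<not> (0 \<le> c$i) then a$i else 0)" for a :: "real^'d"
    have pos_in: "pos a \<in> A" if "a \<in> A" for a
      unfolding pos_def using trunc_in[OF dc that, where P="\<lambda>i. 0 \<le> c$i"] nnA that by blast
    have neg_in: "neg a \<in> A" if "a \<in> A" for a
      unfolding neg_def using trunc_in[OF dc that, where P="\<lambda>i. \<not> (0 \<le> c$i)"] nnA that by blast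
    have cp_eq: "inner cp a = \<pi> (pos a)" for a
      unfolding pc inner_vec_def cp_def pos_def by (intro sum.cong) auto
    have cm_eq: "inner cm a = - \<pi> (neg a)" for a
      unfolding pc inner_vec_def cm_def neg_def
      by (simp add: sum_negf[symmetric]) (intro sum.cong, auto)
    have csplit: "\<pi> b = inner cp b - inner cm b" for b
      unfolding pc inner_vec_def cm_def cp_def
      by (simp add: sum_subtractf[symmetric]) (intro sum.cong, auto simp: max_def)
    have pi0: "\<pi> 0 = 0" using lin by (rule linear_0)
    have cp_le: "inner cp a \<le> w" if "a \<in> A" for a
      using wb[OF pos_in[OF that] zA] cp_eq pi0 by simp
    have cm_le: "inner cm a \<le> w" if "a \<in> A" for a
      using wb[OF zA neg_in[OF that]] cm_eq pi0 by simp
    define P where "P = (SUP a\<in>A. ereal (inner cp a))"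
    define M where "M = (SUP a\<in>A. ereal (inner cm a))"
    have Pu: "ereal (inner cp a) \<le> P" if "a \<in> A" for a unfolding P_def using that by (rule SUP_upper)
    have Mu: "ereal (inner cm a) \<le> M" if "a \<in> A" for a unfolding M_def using that by (rule SUP_upper)
    have Pw: "P \<le> ereal w" unfolding P_def by (rule SUP_least) (use cp_le in simp)
    have Mw: "M \<le> ereal w" unfolding M_def by (rule SUP_least) (use cm_le in simp)
    obtain p where p: "P = ereal p" using Pu[OF a0] Pw by (cases P) auto
    obtain m where m: "M = ereal m" using Mu[OF a0] Mw by (cases M) auto
    have pw: "p \<le> w" using Pw p by simp
    have mw: "m \<le> w" using Mw m by simp
    have bp: "inner cp b \<le> (1 + eps) * p" if "b \<in> B" for b
    proof -
      have "ereal (inner cp b) \<le> (SUP b\<in>B. ereal (inner cp b))" using that by (rule SUP_upper)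
      also have "\<dots> \<le> ereal (1 + eps) * P" using cond ncp unfolding P_def by blast
      finally show ?thesis using p by simp
    qed
    have bm: "inner cm b \<le> (1 + eps) * m" if "b \<in> B" for b
    proof -
      have "ereal (inner cm b) \<le> (SUP b\<in>B. ereal (inner cm b))" using that by (rule SUP_upper)
      also have "\<dots> \<le> ereal (1 + eps) * M" using cond ncm unfolding M_def by blast
      finally show ?thesis using m by simp
    qed
    have key: "(INF a\<in>A. ereal \<bar>\<pi> b - \<pi> a\<bar>) \<le> ereal (eps * w) + ereal d"
      if b: "b \<in> B" and d: "0 < d" for b d
    proof -
      have "ereal (p - d) < P" using p d by simp
      then obtain a1 where a1: "a1 \<in> A" "ereal (p - d) < ereal (inner cp a1)"
        unfolding P_def less_SUP_iff by blast
      have "ereal (m - d) < M" using m d by simp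
      then obtain a2 where a2: "a2 \<in> A" "ereal (m - d) < ereal (inner cm a2)"
        unfolding M_def less_SUP_iff by blast
      have nb: "nonneg_vec b" using nnB b by blast
      have cpb: "0 \<le> inner cp b" by (rule inner_nonneg_vec[OF ncp nb])
      have cmb: "0 \<le> inner cm b" by (rule inner_nonneg_vec[OF ncm nb])
      have a1p: "inner cp a1 \<le> p" using Pu[OF a1(1)] p by simp
      have a2m: "inner cm a2 \<le> m" using Mu[OF a2(1)] m by simp
      have ew: "eps * p \<le> eps * w" "eps * m \<le> eps * w"
        using pw mw e0 by (auto intro: mult_left_mono)
      have ew0: "0 \<le> eps * w" using e0 w by simp
      have "\<exists>a\<in>A. \<bar>\<pi> b - \<pi> a\<bar> \<le> eps * w + d"
      proof (cases "\<pi> b > \<pi> (pos a1)")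
        case True
        then show ?thesis
          using a1 bp[OF b] csplit[of b] cp_eq[of a1] cmb ew pos_in[OF a1(1)]
          by (intro bexI[of _ "pos a1"]) (auto simp: algebra_simps)
      next
        case F1: False
        show ?thesis
        proof (cases "\<pi> b < \<pi> (neg a2)")
          case True
          then show ?thesis
            using a2 bm[OF b] csplit[of b] cm_eq[of a2] cpb ew neg_in[OF a2(1)]
            by (intro bexI[of _ "neg a2"]) (auto simp: algebra_simps)
        next
          case False
          then obtain z where "z \<in> A" "\<pi> z = \<pi> b"
            using interp[OF cvx pos_in[OF a1(1)] neg_in[OF a2(1)] lin, of "\<pi> b"] F1 by (auto simp: not_less)
          then show ?thesis using ew0 d by (intro bexI[of _ z]) auto
        qed
      qed
      then obtain a where "a \<in> A" "\<bar>\<pi> b - \<pi> a\<bar> \<le> eps * w + d" by blast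
      then show ?thesis by (intro INF_lower2[of a]) auto
    qed
    have numle: "num \<le> ereal (eps * w)" unfolding num_def
    proof (rule SUP_least)
      fix b assume "b \<in> B"
      show "(INF a\<in>A. ereal \<bar>\<pi> b - \<pi> a\<bar>) \<le> ereal (eps * w)"
        by (rule ereal_le_epsilon2) (use key \<open>b \<in> B\<close> in blast)
    qed
    show ?thesis
    proof (cases "w = 0")
      case True
      then have "num = 0" using numle num0 by (simp add: zero_ereal_def)
      then show ?thesis unfolding num_def[symmetric] den_def[symmetric] rfrac_def using e0 by simp
    next
      case False
      then have wp: "w > 0" using w by simp
      obtain n where n: "num = ereal n" using numle num0 by (cases num) auto
      have "n \<le> eps * w" using numle n by simp
      then have "n / w \<le> eps" using wp by (simp add: field_simps)
      then show ?thesis unfolding num_def[symmetric] den_def[symmetric] rfrac_def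
        using n w wp by simp
    qed
  qed
qed

theorem mainTheorem5:
  fixes A B :: "(real^'d) set"
  assumes "A \<noteq> {}" and "B \<noteq> {}"
    and "convex A" and "convex B"
    and "A \<subseteq> B" and "\<forall>x\<in>B. nonneg_vec x"
    and "down_closed A"
  shows "rdist A B = LPgapMax A B"
proof (rule antisym)
  show "rdist A B \<le> LPgapMax A B"
    unfolding LPgapMax_def
  proof (rule Inf_greatest, clarify)
    fix eps :: real
    assume e0: "0 \<le> eps" and cond: "\<forall>c. nonneg_vec c \<longrightarrow>
        ereal (1 + eps) * (SUP a\<in>A. ereal (inner c a)) \<ge> (SUP b\<in>B. ereal (inner c b))"
    show "rdist A B \<le> ereal eps" unfolding rdist_def
      by (rule SUP_least) (use part2[OF assms(1,2,3,5,6,7) e0 cond] in blast)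
  qed
next
  have R0: "0 \<le> rdist A B" unfolding rdist_def
    by (rule SUP_upper2[of "\<lambda>x. 0"])
      (use assms(1,2) in \<open>auto simp: rfrac_def linear_zero zero_ereal_def[symmetric]\<close>)
  show "LPgapMax A B \<le> rdist A B"
  proof (cases "rdist A B = \<infinity>")
    case True then show ?thesis by simp
  next
    case False
    then obtain r where r: "rdist A B = ereal r" "0 \<le> r" using R0 by (cases "rdist A B") auto
    have "ereal r \<in> {ereal eps | eps. eps \<ge> 0 \<and>
     (\<forall>c. nonneg_vec c \<longrightarrow>
        ereal (1 + eps) * (SUP a\<in>A. ereal (inner c a)) \<ge> (SUP b\<in>B. ereal (inner c b)))}"
    proof (intro CollectI exI conjI allI impI)
      fix c :: "real^'d" assume nc: "nonneg_vec c"
      have lin: "linear (inner c)" by (rule bounded_linear.linear[OF bounded_linear_inner_right])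
      have "rfrac (SUP b\<in>B. INF a\<in>A. ereal \<bar>inner c b - inner c a\<bar>)
           (SUP p\<in>A \<times> A. ereal \<bar>inner c (fst p) - inner c (snd p)\<bar>) \<le> rdist A B"
        unfolding rdist_def by (rule SUP_upper2[OF CollectI[of linear, OF lin]]) simp
      then show "(SUP b\<in>B. ereal (inner c b)) \<le> ereal (1 + r) * (SUP a\<in>A. ereal (inner c a))"
        using part1[OF assms(1,5,6,7) nc r(2)] r(1) by simp
    qed (use r in auto)
    then show ?thesis unfolding LPgapMax_def r(1) by (rule Inf_lower)
  qed
qed

end
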